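(* Let $D$ be a finite set, $k\ge2$, and let $P:D^k\to\{0,1\}$ be a $k$-ary predicate which contains a singleton $\ell$-cube for some $2\le\ell\le k$. Then there exist a weighted directed $k$-uniform hypergraph $H=(V,E,w)$ with $|V|=n$ such that for every $0<\varepsilon<1$ and every $\varepsilon$-$P$-sparsifier $H_\varepsilon=(V,E_\varepsilon,w_\varepsilon)$ of $H$ we have $|E_\varepsilon|=\Omega(n^\ell)$; that is, there is a constant $c>0$ such that for infinitely many $n$ there is such an $H$ on $n$ vertices with $|E_\varepsilon|\ge cn^\ell$ for all such $\varepsilon$ and $H_\varepsilon$.
   Context: $P$ contains a singleton $\ell$-cube if there exist two-element subsets $D_j=\{d^j_0,d^j_1\}\subseteq D$ for $j=1,\dots,\ell$, indices $n_1,\dots,n_\ell\in\{0,1\}$ and a permutation $\sigma$ of the $k$ coordinates such that (i) there exist $x_{\ell+1},\dots,x_k\in D$ with $P(\sigma(d^1_{n_1},\dots,d^\ell_{n_\ell},x_{\ell+1},\dots,x_k))=1$, and (ii) for all $y_{\ell+1},\dots,y_k\in D$ and all $i_1,\dots,i_\ell\in\{0,1\}$, $P(\sigma(d^1_{i_1},\dots,d^\ell_{i_\ell},y_{\ell+1},\dots,y_k))=1$ implies $i_j=n_j$ for all $j=1,\dots,\ell$. Here $\sigma(\cdot)$ permutes the entries of the tuple. A weighted directed $k$-uniform hypergraph $H=(V,E,w)$ has $E$ a set of ordered $k$-tuples of distinct vertices and $w:E\to\mathbb{R}_{>0}$. For $A:V\to D$, $\mathrm{Val}_{H,P}(A)=\sum_{e\in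 E}w(e)P(A(e))$ with $A$ applied entrywise. An $\varepsilon$-$P$-sparsifier of $H$ is $H_\varepsilon=(V,E_\varepsilon,w_\varepsilon)$ with $E_\varepsilon\subseteq E$, $w_\varepsilon:E_\varepsilon\to\mathbb{R}_{>0}$, such that for every $A:V\to D$, $(1-\varepsilon)\mathrm{Val}_{H,P}(A)\le\mathrm{Val}_{H_\varepsilon,P}(A)\le(1+\varepsilon)\mathrm{Val}_{H,P}(A)$. *)

theory Defs
  imports "HOL-Analysis.Analysis" "HOL-Combinatorics.Permutations"
begin

text \<open>Tuples in D^k are lists of length k with entries in D; a k-ary predicate is
  P :: 'd list => bool (true = 1, false = 0).\<close>

definition permute_tuple :: "(nat \<Rightarrow> nat) \<Rightarrow> 'a list \<Rightarrow> 'a list" where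
  "permute_tuple \<sigma> xs = map (\<lambda>i. xs ! \<sigma> i) [0..<length xs]"

text \<open>The two-element sets are D_j = {d j False, d j True} (j < l), indices n_j are
  booleans n j.\<close>

definition contains_singleton_cube ::
    "'d set \<Rightarrow> nat \<Rightarrow> ('d list \<Rightarrow> bool) \<Rightarrow> nat \<Rightarrow> bool" where
  "contains_singleton_cube D k P l \<longleftrightarrow>
     (\<exists>(d :: nat \<Rightarrow> bool \<Rightarrow> 'd) (nn :: nat \<Rightarrow> bool) \<sigma>.
        (\<forall>j<l. d j False \<in> D \<and> d j True \<in> D \<and> d j False \<noteq> d j True) \<and>
        \<sigma> permutes {..<k} \<and>
        (\<exists>xs. length xs = k - l \<and> set xs \<subseteq> D \<and>
           P (permute_tuple \<sigma> (map (\<lambda>j. d j (nn j)) [0..<l] @ xs))) \<and>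
        (\<forall>ys (ii :: nat \<Rightarrow> bool). length ys = k - l \<and> set ys \<subseteq> D \<and>
           P (permute_tuple \<sigma> (map (\<lambda>j. d j (ii j)) [0..<l] @ ys))
           \<longrightarrow> (\<forall>j<l. ii j = nn j)))"

definition wdhypergraph :: "nat \<Rightarrow> 'v set \<Rightarrow> 'v list set \<Rightarrow> ('v list \<Rightarrow> real) \<Rightarrow> bool" where
  "wdhypergraph k V E w \<longleftrightarrow> finite V \<and>
     (\<forall>e\<in>E. length e = k \<and> distinct e \<and> set e \<subseteq> V) \<and> (\<forall>e\<in>E. w e > 0)"

definition Val :: "'v list set \<Rightarrow> ('v list \<Rightarrow> real) \<Rightarrow> ('d list \<Rightarrow> bool) \<Rightarrow> ('v \<Rightarrow> 'd) \<Rightarrow> real" where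
  "Val E w P A = (\<Sum>e\<in>E. w e * of_bool (P (map A e)))"

definition is_sparsifier ::
    "'d set \<Rightarrow> ('d list \<Rightarrow> bool) \<Rightarrow> real \<Rightarrow> 'v set \<Rightarrow> 'v list set \<Rightarrow> ('v list \<Rightarrow> real)
      \<Rightarrow> 'v list set \<Rightarrow> ('v list \<Rightarrow> real) \<Rightarrow> bool" where
  "is_sparsifier D P \<epsilon> V E w E' w' \<longleftrightarrow> E' \<subseteq> E \<and> (\<forall>e\<in>E'. w' e > 0) \<and>
     (\<forall>A. A ` V \<subseteq> D \<longrightarrow>
        (1 - \<epsilon>) * Val E w P A \<le> Val E' w' P A \<and> Val E' w' P A \<le> (1 + \<epsilon>) * Val E w P A)"

end

theory Submission
  imports Defs
begin

lemma pt_length [simp]: "length (permute_tuple s xs) = length xs"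
  by (simp add: permute_tuple_def)

lemma pt_nth: "i < length xs \<Longrightarrow> permute_tuple s xs ! i = xs ! s i"
  by (simp add: permute_tuple_def)

lemma pt_map:
  assumes "s permutes {..<length xs}"
  shows "map f (permute_tuple s xs) = permute_tuple s (map f xs)"
proof (rule nth_equalityI)
  fix i assume "i < length (map f (permute_tuple s xs))"
  then have i: "i < length xs" by simp
  have "s i < length xs" using permutes_in_image[OF assms] i by auto
  then show "map f (permute_tuple s xs) ! i = permute_tuple s (map f xs) ! i"
    using i by (simp add: pt_nth)
qed simp

lemma pt_set:
  assumes "s permutes {..<length xs}"
  shows "set (permute_tuple s xs) = set xs"
proof -
  have "set (permute_tuple s xs) = (\<lambda>i. xs ! s i) ` {..<length xs}"
    by (auto simp: permute_tuple_def)
  also have "\<dots> = (\<lambda>i. xs ! i) ` (s ` {..<length xs})" by auto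
  also have "\<dots> = set xs" using permutes_image[OF assms] by (auto simp: in_set_conv_nth)
  finally show ?thesis .
qed

lemma pt_distinct:
  assumes "s permutes {..<length xs}" "distinct xs"
  shows "distinct (permute_tuple s xs)"
proof -
  have "card (set (permute_tuple s xs)) = length xs"
    using pt_set[OF assms(1)] assms(2) distinct_card by metis
  then show ?thesis by (metis card_distinct pt_length)
qed

lemma pt_inj:
  assumes "s permutes {..<n}" "length xs = n" "length ys = n"
    "permute_tuple s xs = permute_tuple s ys"
  shows "xs = ys"
proof (rule nth_equalityI)
  show "length xs = length ys" using assms by simp
  fix i assume i: "i < length xs"
  have "surj s" using permutes_surj[OF assms(1)] .
  then obtain j where j: "s j = i" by (metis surj_def)
  have "j < n"
  proof (rule ccontr)
    assume "\<not> j < n"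
    then have "s j = j" using permutes_not_in[OF assms(1)] by auto
    then show False using \<open>\<not> j < n\<close> i j assms(2) by simp
  qed
  then have "permute_tuple s xs ! j = permute_tuple s ys ! j" using assms(4) by simp
  then show "xs ! i = ys ! i" using \<open>j < n\<close> assms(2,3) j by (simp add: pt_nth)
qed

theorem proposition15:
  fixes D :: "'d set" and P :: "'d list \<Rightarrow> bool" and k l :: nat
  assumes "finite D" and "k \<ge> 2" and "2 \<le> l" and "l \<le> k"
    and "contains_singleton_cube D k P l"
  shows "\<exists>c>0. infinite {n :: nat. \<exists>(V :: nat set) E w.
           wdhypergraph k V E w \<and> card V = n \<and>
           (\<forall>\<epsilon>. 0 < \<epsilon> \<and> \<epsilon> < 1 \<longrightarrow>
              (\<forall>E' w'. is_sparsifier D P \<epsilon> V E w E' w' \<longrightarrow> real (card E') \<ge> c * real n ^ l))}"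
proof -
  obtain d :: "nat \<Rightarrow> bool \<Rightarrow> 'd" and nn \<sigma> where
    dD: "\<forall>j<l. d j False \<in> D \<and> d j True \<in> D \<and> d j False \<noteq> d j True" and
    sig: "\<sigma> permutes {..<k}" and
    ex: "\<exists>xs. length xs = k - l \<and> set xs \<subseteq> D \<and>
           P (permute_tuple \<sigma> (map (\<lambda>j. d j (nn j)) [0..<l] @ xs))" and
    uniq: "\<forall>ys (ii :: nat \<Rightarrow> bool). length ys = k - l \<and> set ys \<subseteq> D \<and>
           P (permute_tuple \<sigma> (map (\<lambda>j. d j (ii j)) [0..<l] @ ys))
           \<longrightarrow> (\<forall>j<l. ii j = nn j)"
    using assms(5) unfolding contains_singleton_cube_def by blast
  obtain xs where xsl: "length xs = k - l" and xsD: "set xs \<subseteq> D" and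
    xsP: "P (permute_tuple \<sigma> (map (\<lambda>j. d j (nn j)) [0..<l] @ xs))"
    using ex by blast
  have l0: "l > 0" using assms(3) by simp
  have dD': "d j b \<in> D" if "j < l" for j b using dD that by (cases b) auto
  define c :: real where "c = 1 / real k ^ l"
  have c0: "c > 0" using assms(2) by (simp add: c_def)
  define pre where "pre = (\<lambda>as. map (\<lambda>j. as ! j * l + j) [0..<l])"
  define suf where "suf = (\<lambda>m::nat. map (\<lambda>i. l * m + i) [0..<k - l])"
  define edge where "edge = (\<lambda>m as. permute_tuple \<sigma> (pre as @ suf m))"
  define Ls where "Ls = (\<lambda>m::nat. {as. set as \<subseteq> {..<m} \<and> length as = l})"
  have len: "length (pre as @ suf m) = k" for as m
    using assms(4) by (simp add: pre_def suf_def)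
  have sigk: "\<sigma> permutes {..<length (pre as @ suf m)}" for as m
    using sig len by simp
  have prelt: "x < l * m" if xa: "x \<in> set (pre as)" "as \<in> Ls m" for x as m
  proof -
    obtain j where j: "j < l" "x = as ! j * l + j" using xa(1) by (auto simp: pre_def)
    have "length as = l" "set as \<subseteq> {..<m}" using xa(2) unfolding Ls_def by auto
    then have "as ! j \<in> {..<m}" using j(1) nth_mem[of j as] by blast
    then have "as ! j < m" by simp
    then have "as ! j + 1 \<le> m" by simp
    then have "(as ! j + 1) * l \<le> m * l" by (rule mult_right_mono) simp
    then show ?thesis using j by (simp add: algebra_simps)
  qed
  have preinj: "as = bs" if "pre as = pre bs" "as \<in> Ls m" "bs \<in> Ls m" for as bs m
  proof (rule nth_equalityI)
    show "length as = length bs" using that by (simp add: Ls_def)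
    fix j assume "j < length as"
    then have j: "j < l" using that by (simp add: Ls_def)
    have "pre as ! j = pre bs ! j" using that by simp
    then have "as ! j * l + j = bs ! j * l + j" using j by (simp add: pre_def)
    then show "as ! j = bs ! j" using l0 by simp
  qed
  have edgeinj: "inj_on (edge m) (Ls m)" for m
  proof (rule inj_onI)
    fix as bs assume a: "as \<in> Ls m" "bs \<in> Ls m" "edge m as = edge m bs"
    then have "pre as @ suf m = pre bs @ suf m"
      using pt_inj[OF sig len len] unfolding edge_def by blast
    then show "as = bs" using preinj a by simp
  qed
  have key: "\<exists>(V :: nat set) E w.
           wdhypergraph k V E w \<and> card V = l * m + (k - l) \<and>
           (\<forall>\<epsilon>. 0 < \<epsilon> \<and> \<epsilon> < 1 \<longrightarrow>
              (\<forall>E' w'. is_sparsifier D P \<epsilon> V E w E' w' \<longrightarrow>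
                 real (card E') \<ge> c * real (l * m + (k - l)) ^ l))"
    if m1: "m \<ge> 1" for m
  proof -
    define V where "V = {..< l * m + (k - l)}"
    define E where "E = edge m ` Ls m"
    have finE: "finite E" unfolding E_def Ls_def
      by (rule finite_imageI) (rule finite_lists_length_eq, simp)
    have cardE: "card E = m ^ l"
      unfolding E_def using edgeinj card_lists_length_eq[of "{..<m}" l]
      by (simp add: card_image Ls_def)
    have wd: "wdhypergraph k V E (\<lambda>_. 1)"
      unfolding wdhypergraph_def
    proof (intro conjI ballI)
      show "finite V" by (simp add: V_def)
      fix e assume "e \<in> E"
      then obtain as where as: "as \<in> Ls m" "e = edge m as" by (auto simp: E_def)
      show "length e = k" using as len by (simp add: edge_def)
      have dpre: "distinct (pre as)" unfolding pre_def
      proof (rule distinct_map[THEN iffD2], intro conjI inj_onI)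
        fix i j assume "i \<in> set [0..<l]" "j \<in> set [0..<l]" "as ! i * l + i = as ! j * l + j"
        then show "i = j" by (metis atLeastLessThan_iff mod_mult_self3 mod_less set_upt)
      qed simp
      have dsuf: "distinct (suf m)" by (simp add: suf_def distinct_map)
      have disj: "set (pre as) \<inter> set (suf m) = {}"
        using prelt[OF _ as(1)] by (fastforce simp: suf_def)
      show "distinct e" using as pt_distinct[OF sigk] dpre dsuf disj
        by (simp add: edge_def)
      have "set (pre as @ suf m) \<subseteq> V"
        using prelt[OF _ as(1)] by (fastforce simp: suf_def V_def)
      then show "set e \<subseteq> V" using as pt_set[OF sigk] by (simp add: edge_def)
    qed simp
    have ess: "E \<subseteq> E'" if sp: "is_sparsifier D P \<epsilon> V E (\<lambda>_. 1) E' w'" and eps: "\<epsilon> < 1"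
      for \<epsilon> E' w'
    proof
      fix e0 assume "e0 \<in> E"
      then obtain as0 where as0: "as0 \<in> Ls m" "e0 = edge m as0" by (auto simp: E_def)
      define A where "A = (\<lambda>v. if v < l * m then
          d (v mod l) (if v div l = as0 ! (v mod l) then nn (v mod l) else \<not> nn (v mod l))
          else xs ! (v - l * m))"
      have AD: "A ` V \<subseteq> D"
      proof
        fix y assume "y \<in> A ` V"
        then obtain v where v: "v \<in> V" "y = A v" by auto
        show "y \<in> D"
        proof (cases "v < l * m")
          case True then show ?thesis using v dD' l0 by (simp add: A_def)
        next
          case False
          then have "v - l * m < length xs" using v xsl by (simp add: V_def)
          then show ?thesis using v False xsD by (auto simp: A_def)
        qed
      qed
      have mapA: "map A (edge m as) = permute_tuple \<sigma>
          (map (\<lambda>j. d j (if as ! j = as0 ! j then nn j else \<not> nn j)) [0..<l] @ xs)"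
        if as: "as \<in> Ls m" for as
      proof -
        have "map A (pre as) = map (\<lambda>j. d j (if as ! j = as0 ! j then nn j else \<not> nn j)) [0..<l]"
        proof (rule nth_equalityI)
          fix j assume "j < length (map A (pre as))"
          then have j: "j < l" by (simp add: pre_def)
          have "as ! j * l + j < l * m" using prelt[OF _ as] j by (auto simp: pre_def)
          then show "map A (pre as) ! j = map (\<lambda>j. d j (if as ! j = as0 ! j then nn j else \<not> nn j)) [0..<l] ! j"
            using j by (simp add: pre_def A_def)
        qed (simp add: pre_def)
        moreover have "map A (suf m) = xs"
          by (rule nth_equalityI) (auto simp: suf_def A_def xsl)
        ultimately show ?thesis unfolding edge_def by (simp only: pt_map[OF sigk] map_append)
      qed
      have Pe: "e = e0" if "e \<in> E" "P (map A e)" for e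
      proof -
        note th = that
        obtain as where as: "as \<in> Ls m" "e = edge m as" using th(1) by (auto simp: E_def)
        define ii where "ii = (\<lambda>j. if as ! j = as0 ! j then nn j else \<not> nn j)"
        have "P (permute_tuple \<sigma> (map (\<lambda>j. d j (ii j)) [0..<l] @ xs))"
          using th(2) mapA[OF as(1)] as(2) by (simp add: ii_def)
        then have u: "length xs = k - l \<and> set xs \<subseteq> D \<and>
            P (permute_tuple \<sigma> (map (\<lambda>j. d j (ii j)) [0..<l] @ xs))"
          using xsl xsD by simp
        have "\<forall>j<l. as ! j = as0 ! j"
        proof (intro allI impI)
          fix j assume "j < l"
          then have "ii j = nn j" using uniq[rule_format, OF u] by simp
          then show "as ! j = as0 ! j" by (cases "as ! j = as0 ! j") (auto simp: ii_def)
        qed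
        then have "as = as0" using as(1) as0(1)
          by (intro nth_equalityI) (auto simp: Ls_def)
        then show ?thesis using as as0 by simp
      qed
      have Pe0: "P (map A e0)"
      proof -
        have "map (\<lambda>j. d j (if as0 ! j = as0 ! j then nn j else \<not> nn j)) [0..<l]
              = map (\<lambda>j. d j (nn j)) [0..<l]" by simp
        then show ?thesis using mapA[OF as0(1)] as0(2) xsP by simp
      qed
      have "Val E (\<lambda>_. 1) P A = (\<Sum>e\<in>E. if e = e0 then 1 else 0)"
        unfolding Val_def
      proof (rule sum.cong)
        fix e assume eE: "e \<in> E"
        show "1 * of_bool (P (map A e)) = (if e = e0 then 1 else (0::real))"
        proof (cases "e = e0")
          case True then show ?thesis using Pe0 by simp
        next
          case False then have "\<not> P (map A e)" using Pe[OF eE] by blast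
          then show ?thesis using False by simp
        qed
      qed simp
      also have "\<dots> = 1" using finE \<open>e0 \<in> E\<close> by simp
      finally have V1: "Val E (\<lambda>_. 1) P A = 1" .
      show "e0 \<in> E'"
      proof (rule ccontr)
        assume n: "e0 \<notin> E'"
        have sub: "E' \<subseteq> E" using sp by (simp add: is_sparsifier_def)
        have "Val E' w' P A = 0" unfolding Val_def
        proof (rule sum.neutral, rule ballI)
          fix e assume eE: "e \<in> E'"
          then have "e \<noteq> e0" using n by blast
          then have "\<not> P (map A e)" using Pe sub eE by blast
          then show "w' e * of_bool (P (map A e)) = 0" by simp
        qed
        moreover have "(1 - \<epsilon>) * Val E (\<lambda>_. 1) P A \<le> Val E' w' P A"
          using sp AD by (simp add: is_sparsifier_def)
        ultimately show False using V1 eps by simp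
      qed
    qed
    have num: "c * real (l * m + (k - l)) ^ l \<le> real (m ^ l)"
    proof -
      have "l * m + (k - l) \<le> k * m"
      proof -
        have "k * m = l * m + (k - l) * m" using assms(4) by (simp add: algebra_simps)
        moreover have "(k - l) * 1 \<le> (k - l) * m" using m1 by (rule mult_left_mono) simp
        ultimately show ?thesis by simp
      qed
      then have "real (l * m + (k - l)) \<le> real (k * m)" by (rule of_nat_mono)
      then have "real (l * m + (k - l)) \<le> real k * real m" by simp
      then have "real (l * m + (k - l)) ^ l \<le> (real k * real m) ^ l"
        by (rule power_mono) simp
      then have "c * real (l * m + (k - l)) ^ l \<le> c * (real k ^ l * real m ^ l)"
        using c0 by (simp add: power_mult_distrib)
      also have "\<dots> = real m ^ l" using assms(2) by (simp add: c_def)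
      finally show ?thesis by simp
    qed
    show ?thesis
    proof (intro exI conjI allI impI)
      show "wdhypergraph k V E (\<lambda>_. 1)" by (rule wd)
      show "card V = l * m + (k - l)" by (simp add: V_def)
      fix \<epsilon> E' w'
      assume "0 < \<epsilon> \<and> \<epsilon> < 1" "is_sparsifier D P \<epsilon> V E (\<lambda>_. 1) E' w'"
      then have "E' = E" using ess by (auto simp: is_sparsifier_def)
      then show "c * real (l * m + (k - l)) ^ l \<le> real (card E')" using num cardE by simp
    qed
  qed
  define f where "f = (\<lambda>m::nat. l * (m + 1) + (k - l))"
  have "inj f" using l0 by (auto simp: inj_def f_def)
  then have inf: "infinite (range f)" by (simp add: infinite_UNIV_nat finite_image_iff)
  show ?thesis
  proof (intro exI conjI)
    show "c > 0" by (rule c0)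
    show "infinite {n :: nat. \<exists>(V :: nat set) E w.
           wdhypergraph k V E w \<and> card V = n \<and>
           (\<forall>\<epsilon>. 0 < \<epsilon> \<and> \<epsilon> < 1 \<longrightarrow>
              (\<forall>E' w'. is_sparsifier D P \<epsilon> V E w E' w' \<longrightarrow> real (card E') \<ge> c * real n ^ l))}"
      (is "infinite ?S")
    proof (rule infinite_super[OF _ inf])
      show "range f \<subseteq> ?S"
      proof
        fix n assume "n \<in> range f"
        then obtain m where "n = f m" by auto
        then show "n \<in> ?S" using key[of "m + 1"] by (simp add: f_def)
      qed
    qed
  qed
qed

end
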